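(* Consider a multi-rate fluid assignment (rates $\theta_i^L$ for $\tau_i\in\tau$; $\theta_{i,j}^H$, $\theta_i^H$ for $\tau_i\in\tau_H$, $1\le j\le n_H$; window durations $w_1,\dots,w_{n_H}\ge 0$) such that $\theta_{i,j}^H=\theta_i^H$ for all $\tau_i\in\tau_H$ and all $1\le j\le n_H$. Then the multi-rate conditions (S1)–(S5) hold if and only if the dual-rate conditions (D1)–(D5) hold.
   Context: Task system $\tau$ on $m$ identical processors; each task $\tau_i$ has period/deadline $T_i>0$, criticality in $\{LO,HI\}$, WCETs $C_i^L\le C_i^H$, $u_i^L=C_i^L/T_i\le1$, $u_i^H=C_i^H/T_i\le1$; $\tau_H$ is the set of HI-tasks, $n_H=|\tau_H|$. All rates lie in $(0,1]$ (transition rates in $[0,1]$). The earliest completion window of $\tau_i\in\tau_H$ is the largest $k_i\in\{1,\dots,n_H+1\}$ with $\sum_{j:1\le j<k_i}w_j<T_i-C_i^L/\theta_i^L$; $R_i=\theta_{i,k_i}^H$ if $k_i\le n_H$ and $R_i=\theta_i^H$ otherwise; by convention $\theta_{i,n_H+1}^H:=\theta_i^H$. Multi-rate conditions: (S1) $\theta_i^L\ge u_i^L$ for all $\tau_i\in\tau$; (S2) $\sum_{\tau_i\in\tau}\theta_i^L\le m$; (S3) $\sum_{\tau_i\in\tau_H}\theta_{i,j}^H\le m$ for all $1\le j\le n_H$, and $\sum_{\tau_i\in\tau_H}\theta_i^H\le m$; (S4) for all $\tau_i\in\tau_H$: $\sum_{j<k_i}\theta_{i,j}^Hw_j+R_i(T_i-C_i^L/\theta_i^L-\sum_{j<k_i}w_j)\ge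 C_i^H-C_i^L$, $\theta_i^L\le\theta_{i,j}^H$ for $k_i\le j\le n_H$, and $\theta_i^L\le\theta_i^H$; (S5) for all $\tau_i\in\tau_H$: $\sum_{j<k_i}\theta_{i,j}^Hw_j\ge u_i^H\sum_{j<k_i}w_j$, $\theta_{i,j}^H\le\theta_{i,j+1}^H$ for $1\le j<k_i$, $\theta_{i,j}^H\ge u_i^H$ for $k_i\le j\le n_H$, and $\theta_i^H\ge u_i^H$. Dual-rate conditions: (D1) $\theta_i^L\ge u_i^L$ for all $\tau_i\in\tau$; (D2) $u_i^L/\theta_i^L+(u_i^H-u_i^L)/\theta_i^H\le1$ for all $\tau_i\in\tau_H$; (D3) $\theta_i^H\ge\theta_i^L$ for all $\tau_i\in\tau_H$; (D4) $\sum_{\tau_i\in\tau}\theta_i^L\le m$; (D5) $\sum_{\tau_i\in\tau_H}\theta_i^H\le m$. *)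

theory Defs
  imports Complex_Main
begin

datatype crit = LO | HI

text \<open>Task set: a finite set tau of task identifiers; crit i is the criticality,
  per i the period/deadline, CL i and CH i the LO/HI WCETs.\<close>

definition HIset :: "'a set \<Rightarrow> ('a \<Rightarrow> crit) \<Rightarrow> 'a set" where
  "HIset tau crit = {i \<in> tau. crit i = HI}"

definition nH :: "'a set \<Rightarrow> ('a \<Rightarrow> crit) \<Rightarrow> nat" where
  "nH tau crit = card (HIset tau crit)"

definition task_system ::
  "'a set \<Rightarrow> ('a \<Rightarrow> crit) \<Rightarrow> ('a \<Rightarrow> real) \<Rightarrow> ('a \<Rightarrow> real) \<Rightarrow> ('a \<Rightarrow> real) \<Rightarrow> bool" where
  "task_system tau crit per CL CH \<longleftrightarrow> finite tau \<and>
     (\<forall>i\<in>tau. 0 < per i \<and> 0 \<le> CL i \<and> CL i \<le> CH i \<and> CL i / per i \<le> 1 \<and> CH i / per i \<le> 1)"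

definition rate_assignment ::
  "'a set \<Rightarrow> ('a \<Rightarrow> crit) \<Rightarrow> ('a \<Rightarrow> real) \<Rightarrow> ('a \<Rightarrow> nat \<Rightarrow> real) \<Rightarrow> ('a \<Rightarrow> real)
     \<Rightarrow> (nat \<Rightarrow> real) \<Rightarrow> bool" where
  "rate_assignment tau crit thL thHw thH w \<longleftrightarrow>
     (\<forall>i\<in>tau. 0 < thL i \<and> thL i \<le> 1) \<and>
     (\<forall>i\<in>HIset tau crit. 0 < thH i \<and> thH i \<le> 1) \<and>
     (\<forall>i\<in>HIset tau crit. \<forall>j\<in>{1..nH tau crit}. 0 \<le> thHw i j \<and> thHw i j \<le> 1) \<and>
     (\<forall>j\<in>{1..nH tau crit}. 0 \<le> w j)"

text \<open>Earliest completion window: the largest k in {1..n_H+1} with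
  sum_{1 \<le> j < k} w_j < T_i - C_i^L/theta_i^L.  (If no such k exists, which can only
  happen when T_i - C_i^L/theta_i^L \<le> 0, we use the convention k_i = 1.)\<close>
definition ecw ::
  "nat \<Rightarrow> (nat \<Rightarrow> real) \<Rightarrow> ('a \<Rightarrow> real) \<Rightarrow> ('a \<Rightarrow> real) \<Rightarrow> ('a \<Rightarrow> real) \<Rightarrow> 'a \<Rightarrow> nat" where
  "ecw n w per CL thL i =
     (if \<exists>k\<in>{1..n+1}. sum w {1..<k} < per i - CL i / thL i
      then (GREATEST k. k \<in> {1..n+1} \<and> sum w {1..<k} < per i - CL i / thL i)
      else 1)"

text \<open>R_i = theta^H_{i,k_i} if k_i \<le> n_H, and theta^H_i otherwise; equivalently this is
  theta^H_{i,k} with the convention theta^H_{i,n_H+1} := theta^H_i (also used in S5).\<close>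
definition Rrate ::
  "nat \<Rightarrow> ('a \<Rightarrow> nat \<Rightarrow> real) \<Rightarrow> ('a \<Rightarrow> real) \<Rightarrow> nat \<Rightarrow> 'a \<Rightarrow> real" where
  "Rrate n thHw thH k i = (if k \<le> n then thHw i k else thH i)"

definition multi_rate_conditions ::
  "'a set \<Rightarrow> ('a \<Rightarrow> crit) \<Rightarrow> ('a \<Rightarrow> real) \<Rightarrow> ('a \<Rightarrow> real) \<Rightarrow> ('a \<Rightarrow> real) \<Rightarrow> nat
     \<Rightarrow> ('a \<Rightarrow> real) \<Rightarrow> ('a \<Rightarrow> nat \<Rightarrow> real) \<Rightarrow> ('a \<Rightarrow> real) \<Rightarrow> (nat \<Rightarrow> real) \<Rightarrow> bool" where
  "multi_rate_conditions tau crit per CL CH m thL thHw thH w \<longleftrightarrow>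
     (let TH = HIset tau crit; n = nH tau crit; k = ecw n w per CL thL in
     \<comment> \<open>S1\<close> (\<forall>i\<in>tau. thL i \<ge> CL i / per i) \<and>
     \<comment> \<open>S2\<close> (\<Sum>i\<in>tau. thL i) \<le> real m \<and>
     \<comment> \<open>S3\<close> (\<forall>j\<in>{1..n}. (\<Sum>i\<in>TH. thHw i j) \<le> real m) \<and> (\<Sum>i\<in>TH. thH i) \<le> real m \<and>
     \<comment> \<open>S4\<close> (\<forall>i\<in>TH.
        (\<Sum>j\<in>{1..<k i}. thHw i j * w j)
          + Rrate n thHw thH (k i) i * (per i - CL i / thL i - (\<Sum>j\<in>{1..<k i}. w j))
          \<ge> CH i - CL i \<and>
        (\<forall>j\<in>{k i..n}. thL i \<le> thHw i j) \<and> thL i \<le> thH i) \<and>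
     \<comment> \<open>S5\<close> (\<forall>i\<in>TH.
        (\<Sum>j\<in>{1..<k i}. thHw i j * w j) \<ge> (CH i / per i) * (\<Sum>j\<in>{1..<k i}. w j) \<and>
        (\<forall>j\<in>{1..<k i}. thHw i j \<le> Rrate n thHw thH (j + 1) i) \<and>
        (\<forall>j\<in>{k i..n}. thHw i j \<ge> CH i / per i) \<and>
        thH i \<ge> CH i / per i))"

definition dual_rate_conditions ::
  "'a set \<Rightarrow> ('a \<Rightarrow> crit) \<Rightarrow> ('a \<Rightarrow> real) \<Rightarrow> ('a \<Rightarrow> real) \<Rightarrow> ('a \<Rightarrow> real) \<Rightarrow> nat
     \<Rightarrow> ('a \<Rightarrow> real) \<Rightarrow> ('a \<Rightarrow> real) \<Rightarrow> bool" where
  "dual_rate_conditions tau crit per CL CH m thL thH \<longleftrightarrow>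
     (let TH = HIset tau crit in
     \<comment> \<open>D1\<close> (\<forall>i\<in>tau. thL i \<ge> CL i / per i) \<and>
     \<comment> \<open>D2\<close> (\<forall>i\<in>TH. (CL i / per i) / thL i + (CH i / per i - CL i / per i) / thH i \<le> 1) \<and>
     \<comment> \<open>D3\<close> (\<forall>i\<in>TH. thH i \<ge> thL i) \<and>
     \<comment> \<open>D4\<close> (\<Sum>i\<in>tau. thL i) \<le> real m \<and>
     \<comment> \<open>D5\<close> (\<Sum>i\<in>TH. thH i) \<le> real m)"

end

theory Submission
  imports Defs
begin

lemma ecw_bounds: "1 \<le> ecw n w per CL thL i \<and> ecw n w per CL thL i \<le> n + 1"
proof (cases "\<exists>k\<in>{1..n+1}. sum w {1..<k} < per i - CL i / thL i")
  case True
  then obtain k where k: "k \<in> {1..n+1}" "sum w {1..<k} < per i - CL i / thL i" by blast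
  let ?P = "\<lambda>k. k \<in> {1..n+1} \<and> sum w {1..<k} < per i - CL i / thL i"
  have b: "\<forall>y. ?P y \<longrightarrow> y \<le> n+1" by auto
  have "?P (GREATEST k. ?P k)" using GreatestI_nat[of ?P k "n+1"] k b by blast
  then show ?thesis using True by (simp add: ecw_def)
next
  case False
  then show ?thesis by (simp add: ecw_def)
qed

lemma key:
  fixes h l p cl ch W :: real
  assumes "0 < h" "0 < l" "0 < p" "0 \<le> cl" "cl \<le> ch" "0 \<le> W"
  shows "(ch - cl \<le> h * W + h * (p - cl / l - W) \<and> l \<le> h \<and> ch / p * W \<le> h * W \<and> ch / p \<le> h)
     \<longleftrightarrow> ((cl / p) / l + (ch / p - cl / p) / h \<le> 1 \<and> l \<le> h)"
proof -
  have e1: "h * W + h * (p - cl / l - W) = h * (p - cl / l)" by (simp add: algebra_simps)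
  have e2: "(cl / p) / l + (ch / p - cl / p) / h = (cl / l + (ch - cl) / h) / p"
    using assms by (simp add: field_simps)
  have e3: "(cl / l + (ch - cl) / h) / p \<le> 1 \<longleftrightarrow> cl / l + (ch - cl) / h \<le> p"
    using assms by (simp add: divide_le_eq)
  have e4: "cl / l + (ch - cl) / h \<le> p \<longleftrightarrow> ch - cl \<le> h * (p - cl / l)"
  proof -
    have "cl / l + (ch - cl) / h \<le> p \<longleftrightarrow> (ch - cl) / h \<le> p - cl / l" by linarith
    also have "\<dots> \<longleftrightarrow> ch - cl \<le> (p - cl / l) * h" using assms by (simp add: divide_le_eq)
    finally show ?thesis by (simp add: mult.commute)
  qed
  have imp: "ch / p \<le> h" if "ch - cl \<le> h * (p - cl / l)" "l \<le> h"
  proof -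
    have "cl / h \<le> cl / l" using assms that by (simp add: divide_left_mono)
    hence "h * (cl / h) \<le> h * (cl / l)" using assms by (simp only: mult_left_mono less_imp_le)
    moreover have "h * (cl / h) = cl" using assms by simp
    ultimately have "cl \<le> h * (cl / l)" by simp
    hence "ch \<le> h * p" using that by (simp add: algebra_simps)
    thus ?thesis using assms by (simp add: divide_le_eq mult.commute)
  qed
  show ?thesis
  proof
    assume "ch - cl \<le> h * W + h * (p - cl / l - W) \<and> l \<le> h \<and> ch / p * W \<le> h * W \<and> ch / p \<le> h"
    thus "(cl / p) / l + (ch / p - cl / p) / h \<le> 1 \<and> l \<le> h" using e1 e2 e3 e4 by simp
  next
    assume a: "(cl / p) / l + (ch / p - cl / p) / h \<le> 1 \<and> l \<le> h"
    hence c: "ch - cl \<le> h * (p - cl / l)" using e2 e3 e4 by simp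
    have d: "ch / p \<le> h" using imp c a by blast
    have "ch / p * W \<le> h * W" using d assms by (metis mult_right_mono)
    thus "ch - cl \<le> h * W + h * (p - cl / l - W) \<and> l \<le> h \<and> ch / p * W \<le> h * W \<and> ch / p \<le> h"
      using a c d e1 by simp
  qed
qed

theorem lemma2:
  fixes tau :: "'a set" and crit :: "'a \<Rightarrow> crit"
    and per CL CH :: "'a \<Rightarrow> real" and m :: nat
    and thL thH :: "'a \<Rightarrow> real" and thHw :: "'a \<Rightarrow> nat \<Rightarrow> real" and w :: "nat \<Rightarrow> real"
  assumes "task_system tau crit per CL CH"
    and "rate_assignment tau crit thL thHw thH w"
    and "\<forall>i\<in>HIset tau crit. \<forall>j\<in>{1..nH tau crit}. thHw i j = thH i"
  shows "multi_rate_conditions tau crit per CL CH m thL thHw thH w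
         \<longleftrightarrow> dual_rate_conditions tau crit per CL CH m thL thH"
proof -
  define n where "n = nH tau crit"
  define TH where "TH = HIset tau crit"
  define k where "k = ecw n w per CL thL"
  have THsub: "TH \<subseteq> tau" by (auto simp: TH_def HIset_def)
  have kb: "\<And>i. 1 \<le> k i \<and> k i \<le> n + 1" using ecw_bounds k_def by metis
  have hw: "\<And>i j. i \<in> TH \<Longrightarrow> 1 \<le> j \<Longrightarrow> j \<le> n \<Longrightarrow> thHw i j = thH i"
    using assms(3) by (auto simp: TH_def n_def)
  have S3: "(\<forall>j\<in>{1..n}. (\<Sum>i\<in>TH. thHw i j) \<le> real m) \<and> (\<Sum>i\<in>TH. thH i) \<le> real m
      \<longleftrightarrow> (\<Sum>i\<in>TH. thH i) \<le> real m"
    using hw by (auto intro!: sum.cong)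
  have S4: "((\<Sum>j\<in>{1..<k i}. thHw i j * w j)
          + Rrate n thHw thH (k i) i * (per i - CL i / thL i - (\<Sum>j\<in>{1..<k i}. w j))
          \<ge> CH i - CL i \<and>
        (\<forall>j\<in>{k i..n}. thL i \<le> thHw i j) \<and> thL i \<le> thH i) \<and>
       ((\<Sum>j\<in>{1..<k i}. thHw i j * w j) \<ge> (CH i / per i) * (\<Sum>j\<in>{1..<k i}. w j) \<and>
        (\<forall>j\<in>{1..<k i}. thHw i j \<le> Rrate n thHw thH (j + 1) i) \<and>
        (\<forall>j\<in>{k i..n}. thHw i j \<ge> CH i / per i) \<and>
        thH i \<ge> CH i / per i)
     \<longleftrightarrow> ((CL i / per i) / thL i + (CH i / per i - CL i / per i) / thH i \<le> 1 \<and> thL i \<le> thH i)"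
    if i: "i \<in> TH" for i
  proof -
    have s1: "(\<Sum>j\<in>{1..<k i}. thHw i j * w j) = thH i * (\<Sum>j\<in>{1..<k i}. w j)"
      using hw[OF i] kb[of i] by (auto simp: sum_distrib_left intro!: sum.cong)
    have r: "Rrate n thHw thH (k i) i = thH i" using hw[OF i] kb[of i] by (simp add: Rrate_def)
    have r2: "\<forall>j\<in>{1..<k i}. thHw i j \<le> Rrate n thHw thH (j + 1) i"
      using hw[OF i] kb[of i] by (auto simp: Rrate_def)
    have c1: "(\<forall>j\<in>{k i..n}. thL i \<le> thHw i j) \<and> thL i \<le> thH i \<longleftrightarrow> thL i \<le> thH i"
      using hw[OF i] kb[of i] by auto
    have c2: "(\<forall>j\<in>{k i..n}. thHw i j \<ge> CH i / per i) \<and> thH i \<ge> CH i / per i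
       \<longleftrightarrow> thH i \<ge> CH i / per i"
      using hw[OF i] kb[of i] by auto
    have iT: "i \<in> tau" using i THsub by auto
    have W: "0 \<le> (\<Sum>j\<in>{1..<k i}. w j)"
      using assms(2) kb[of i] by (auto simp: rate_assignment_def n_def intro!: sum_nonneg)
    have pos: "0 < thH i" "0 < thL i" "0 < per i" "0 \<le> CL i" "CL i \<le> CH i"
      using assms(1,2) i iT by (auto simp: task_system_def rate_assignment_def TH_def)
    show ?thesis
      using key[OF pos W] s1 r r2 c1 c2 by (auto simp: mult.commute)
  qed
  show ?thesis
    unfolding multi_rate_conditions_def dual_rate_conditions_def Let_def
      n_def[symmetric] TH_def[symmetric] k_def[symmetric]
    using S3 S4 by blast
qed

end
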